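(* For any collection $\mathcal X$ of arcs of the $\infty$-gon, the collection $\mathsf{nc}\,\mathcal X$ is a Ptolemy diagram.
   Context: An arc of the $\infty$-gon is a pair $(i,j)$ of integers with $j-i\ge 2$. Two arcs $(i,j),(k,l)$ cross if $i<k<j<l$ or $k<i<l<j$. For a collection $\mathcal X$ of arcs, $\mathsf{nc}\,\mathcal X$ denotes the set of all arcs that cross no arc of $\mathcal X$. A Ptolemy diagram of the $\infty$-gon is a collection $\mathcal X$ of arcs such that whenever $(i,j),(r,s)\in\mathcal X$ cross with $i<r$, each of the pairs $(i,r),(i,s),(r,j),(j,s)$ which is an arc (i.e. whose entries differ by at least $2$) lies in $\mathcal X$. *)

theory Defs
  imports Main
begin

definition is_arc :: "int \<times> int \<Rightarrow> bool" where
  "is_arc a \<longleftrightarrow> snd a - fst a \<ge> 2"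

definition crosses :: "int \<times> int \<Rightarrow> int \<times> int \<Rightarrow> bool" where
  "crosses a b \<longleftrightarrow> (case a of (i, j) \<Rightarrow> case b of (k, l) \<Rightarrow>
      (i < k \<and> k < j \<and> j < l) \<or> (k < i \<and> i < l \<and> l < j))"

definition nc :: "(int \<times> int) set \<Rightarrow> (int \<times> int) set" where
  "nc X = {a. is_arc a \<and> (\<forall>b\<in>X. \<not> crosses a b)}"

definition ptolemy_diagram :: "(int \<times> int) set \<Rightarrow> bool" where
  "ptolemy_diagram X \<longleftrightarrow> (\<forall>a\<in>X. is_arc a) \<and>
     (\<forall>i j r s. (i, j) \<in> X \<and> (r, s) \<in> X \<and> crosses (i, j) (r, s) \<and> i < r \<longrightarrow>
        (\<forall>p \<in> {(i, r), (i, s), (r, j), (j, s)}. is_arc p \<longrightarrow> p \<in> X))"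

end

theory Submission
  imports Defs
begin

theorem mainTheorem2:
  assumes "\<forall>a\<in>X. is_arc a"
  shows "ptolemy_diagram (nc X)"
  unfolding ptolemy_diagram_def
proof (intro conjI allI impI ballI)
  fix a assume "a \<in> nc X" thus "is_arc a" by (simp add: nc_def)
next
  fix i j r s p
  assume h: "(i, j) \<in> nc X \<and> (r, s) \<in> nc X \<and> crosses (i, j) (r, s) \<and> i < r"
    and p: "p \<in> {(i, r), (i, s), (r, j), (j, s)}" and ar: "is_arc p"
  have c: "i < r \<and> r < j \<and> j < s" using h by (auto simp: crosses_def)
  have n1: "\<forall>b\<in>X. \<not> crosses (i,j) b" and n2: "\<forall>b\<in>X. \<not> crosses (r,s) b"
    using h by (auto simp: nc_def)
  have "\<forall>b\<in>X. \<not> crosses p b"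
  proof
    fix b assume b: "b \<in> X"
    obtain k l where kl: "b = (k,l)" by fastforce
    have "\<not> crosses (i,j) (k,l)" "\<not> crosses (r,s) (k,l)" using n1 n2 b kl by auto
    then show "\<not> crosses p b" using p c kl unfolding crosses_def by auto
  qed
  then show "p \<in> nc X" using ar by (simp add: nc_def)
qed

end
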